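(* Suppose Assumptions 1 and 2 hold. Let $0<C<K$ be integers and consider $x_{k+1}=x_k-\delta_k\,\mathrm{sign}(v_k)$ for a fixed positive sequence $(\delta_k)$, where each $v_k\in\mathbb{R}^d$ is a measurable, square-integrable function of the entire history up to time $k$ (including $x_1,\dots,x_k$, $v_1,\dots,v_{k-1}$ and all stochastic gradient oracle calls up to time $k$). Let $g_k=\nabla f(x_k)$. Assume that for $k=C,C+1,\dots,K$, $$\mathbb{E}\Big[\sum_{i=1}^d|g_{k,i}|\,\mathbb{P}[\mathrm{sign}(v_{k,i})\neq\mathrm{sign}(g_{k,i})\mid x_k]\Big]\le\xi(k),$$ where $\xi(k)\to0$ as $k\to\infty$. Then, with $f_C:=\mathbb{E}[f(x_C)]$, $$\frac{1}{K-C}\sum_{k=C}^{K-1}\mathbb{E}\|g_k\|_1\le\frac{f_C-f_*+2\sum_{k=C}^{K-1}\delta_k\xi(k)+\sum_{k=C}^{K-1}\frac{\delta_k^2\|\vec L\|_1}{2}}{(K-C)\min_{C\le k\le K-1}\delta_k}.$$ In particular, if $\delta_k=\delta/\sqrt k$ and $\xi(k)=\kappa/\sqrt k$ for constants $\delta>0$, $\kappa\ge0$, then $$\frac{1}{K-C}\sum_{k=C}^{K-1}\mathbb{E}\|g_k\|_1\le\frac{\frac{f_C-f_*}{\delta}+(2\kappa+\|\vec L\|_1\delta/2)(\log K+1)}{\sqrt K-\frac{C}{\sqrt K}}.$$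
   Context: $f:\mathbb{R}^d\to\mathbb{R}$ is differentiable with gradient $g(x)=\nabla f(x)$. Assumption 1: there is a constant $f_*$ with $f(x)\ge f_*$ for all $x$. Assumption 2: there is a vector $\vec L=(L_1,\dots,L_d)$ of non-negative constants such that for all $x,y$, $\big|f(y)-f(x)-g(x)^T(y-x)\big|\le \frac12\sum_{i=1}^d L_i(y_i-x_i)^2$. $\mathrm{sign}$ acts componentwise with $\mathrm{sign}(0)=0$; $v_{k,i}$, $g_{k,i}$ denote $i$-th components. *)

theory Defs
  imports "HOL-Probability.Probability"
begin

definition sign_vec :: "real^'n \<Rightarrow> real^'n" where
  "sign_vec v = (\<chi> i. sgn (v $ i))"

definition l1norm :: "real^'n \<Rightarrow> real" where
  "l1norm v = (\<Sum>i\<in>UNIV. \<bar>v $ i\<bar>)"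

end

theory Submission
  imports Defs
begin

lemma sum_axis_sq: "(\<Sum>j\<in>UNIV. (L::real^'n) $ j * ((t *\<^sub>R axis i 1 :: real^'n) $ j)^2) = L $ i * t^2"
proof -
  have "\<And>j. L $ j * ((t *\<^sub>R axis i 1 :: real^'n) $ j)^2 = (if j = i then L $ i * t^2 else 0)"
    by (simp add: axis_def)
  then show ?thesis by simp
qed

lemma harm_bound: "n \<ge> 1 \<Longrightarrow> (\<Sum>k=1..n. 1 / real k) \<le> ln (real n) + 1"
proof (induction n rule: dec_induct)
  case base then show ?case by simp
next
  case (step n)
  have "ln (real n / real (Suc n)) \<le> real n / real (Suc n) - 1"
    using step by (intro ln_le_minus_one) auto
  also have "\<dots> = - (1 / real (Suc n))" by (simp add: field_simps)
  finally have "1 / real (Suc n) \<le> ln (real (Suc n)) - ln (real n)"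
    using step by (simp add: ln_div)
  then show ?case using step by simp
qed

lemma step_ineq:
  fixes f :: "real^'n \<Rightarrow> real" and g :: "real^'n \<Rightarrow> real^'n"
  assumes A2: "\<And>y z. \<bar>f z - f y - g y \<bullet> (z - y)\<bar> \<le> 1/2 * (\<Sum>i\<in>UNIV. L $ i * (z $ i - y $ i)^2)"
    and Lnn: "\<And>i. L $ i \<ge> 0" and d: "\<delta> \<ge> 0"
  shows "f (y - \<delta> *\<^sub>R sign_vec w) \<le> f y - \<delta> * l1norm (g y)
     + 2 * \<delta> * (\<Sum>i\<in>UNIV. \<bar>g y $ i\<bar> * (if sgn (w $ i) \<noteq> sgn (g y $ i) then 1 else 0))
     + \<delta>^2 * l1norm L / 2"
proof -
  define z where "z = y - \<delta> *\<^sub>R sign_vec w"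
  have 1: "f z \<le> f y + g y \<bullet> (z - y) + 1/2 * (\<Sum>i\<in>UNIV. L $ i * (z $ i - y $ i)^2)"
    using A2[of z y] by linarith
  have 2: "g y \<bullet> (z - y) = (\<Sum>i\<in>UNIV. - (\<delta> * (g y $ i * sgn (w $ i))))"
    by (simp add: z_def inner_vec_def sign_vec_def algebra_simps)
  have 3: "(\<Sum>i\<in>UNIV. L $ i * (z $ i - y $ i)^2) \<le> (\<Sum>i\<in>UNIV. \<delta>^2 * L $ i)"
  proof (rule sum_mono)
    fix i
    have "(z $ i - y $ i)^2 = \<delta>^2 * (sgn (w $ i))^2" by (simp add: z_def sign_vec_def power_mult_distrib)
    also have "\<dots> \<le> \<delta>^2" by (cases "w $ i = 0") (auto simp: sgn_if)
    finally show "L $ i * (z $ i - y $ i)^2 \<le> \<delta>^2 * L $ i"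
      using Lnn[of i] by (simp add: mult_left_mono mult.commute)
  qed
  have 4: "(\<Sum>i\<in>UNIV. - (\<delta> * (g y $ i * sgn (w $ i)))) \<le>
      (\<Sum>i\<in>UNIV. - (\<delta> * \<bar>g y $ i\<bar>) + 2 * \<delta> * (\<bar>g y $ i\<bar> * (if sgn (w $ i) \<noteq> sgn (g y $ i) then 1 else 0)))"
  proof (rule sum_mono)
    fix i
    have "g y $ i * sgn (w $ i) \<ge> \<bar>g y $ i\<bar> - 2 * (\<bar>g y $ i\<bar> * (if sgn (w $ i) \<noteq> sgn (g y $ i) then 1 else 0))"
    proof (cases "sgn (w $ i) = sgn (g y $ i)")
      case True then show ?thesis by (simp add: abs_sgn)
    next
      case False
      have "\<bar>g y $ i * sgn (w $ i)\<bar> \<le> \<bar>g y $ i\<bar>"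
        by (cases "w $ i = 0") (auto simp: abs_mult abs_sgn_eq)
      then have "- \<bar>g y $ i\<bar> \<le> g y $ i * sgn (w $ i)" by linarith
      then show ?thesis using False by simp
    qed
    then show "- (\<delta> * (g y $ i * sgn (w $ i))) \<le> - (\<delta> * \<bar>g y $ i\<bar>) + 2 * \<delta> * (\<bar>g y $ i\<bar> * (if sgn (w $ i) \<noteq> sgn (g y $ i) then 1 else 0))"
      using mult_left_mono[OF \<open>g y $ i * sgn (w $ i) \<ge> _\<close> d] by (simp add: algebra_simps)
  qed
  have l1L: "l1norm L = (\<Sum>i\<in>UNIV. L $ i)" using Lnn by (simp add: l1norm_def)
  have "(\<Sum>i\<in>UNIV. - (\<delta> * \<bar>g y $ i\<bar>) + 2 * \<delta> * (\<bar>g y $ i\<bar> * (if sgn (w $ i) \<noteq> sgn (g y $ i) then 1 else 0)))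
     = - \<delta> * l1norm (g y) + 2 * \<delta> * (\<Sum>i\<in>UNIV. \<bar>g y $ i\<bar> * (if sgn (w $ i) \<noteq> sgn (g y $ i) then 1 else 0))"
    by (simp add: sum.distrib l1norm_def sum_distrib_left sum_negf sum_subtractf)
  moreover have "(\<Sum>i\<in>UNIV. \<delta>^2 * L $ i) = \<delta>^2 * l1norm L" by (simp add: l1L sum_distrib_left)
  ultimately show ?thesis using 1 2 3 4 unfolding z_def[symmetric] by linarith
qed

lemma g_bound:
  fixes f :: "real^'n \<Rightarrow> real" and g :: "real^'n \<Rightarrow> real^'n"
  assumes A2: "\<And>y z. \<bar>f z - f y - g y \<bullet> (z - y)\<bar> \<le> 1/2 * (\<Sum>i\<in>UNIV. L $ i * (z $ i - y $ i)^2)"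
    and A1: "\<And>y. f y \<ge> fstar" and Lnn: "\<And>i. L $ i \<ge> 0"
  shows "\<bar>g y $ i\<bar> \<le> f y - fstar + L $ i / 2"
proof -
  define t where "t = - sgn (g y $ i)"
  define z where "z = y + t *\<^sub>R axis i 1"
  have "f z \<le> f y + g y \<bullet> (z - y) + 1/2 * (\<Sum>j\<in>UNIV. L $ j * (z $ j - y $ j)^2)"
    using A2[of z y] by linarith
  moreover have "g y \<bullet> (z - y) = - \<bar>g y $ i\<bar>"
    by (simp add: z_def t_def inner_axis abs_sgn mult.commute)
  moreover have "(\<Sum>j\<in>UNIV. L $ j * (z $ j - y $ j)^2) = L $ i * t^2"
    using sum_axis_sq[of L t i] by (simp add: z_def)
  moreover have "t^2 \<le> 1" by (auto simp: t_def sgn_if)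
  moreover have "L $ i * t^2 \<le> L $ i" using \<open>t^2 \<le> 1\<close> Lnn[of i] by (simp add: mult_left_le)
  ultimately show ?thesis using A1[of z] by linarith
qed


lemma g_lim:
  fixes f :: "real^'n \<Rightarrow> real" and g :: "real^'n \<Rightarrow> real^'n"
  assumes A2: "\<And>y z. \<bar>f z - f y - g y \<bullet> (z - y)\<bar> \<le> 1/2 * (\<Sum>i\<in>UNIV. L $ i * (z $ i - y $ i)^2)"
  shows "(\<lambda>n. real (Suc n) * (f (y + (1 / real (Suc n)) *\<^sub>R axis i 1) - f y)) \<longlonglongrightarrow> g y $ i"
proof -
  have b: "norm (real (Suc n) * (f (y + (1 / real (Suc n)) *\<^sub>R axis i 1) - f y) - g y $ i)
      \<le> L $ i / 2 * inverse (real (Suc n))" for n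
  proof -
    define t where "t = 1 / real (Suc n)"
    define z where "z = y + t *\<^sub>R axis i 1"
    have tp: "t > 0" by (simp add: t_def)
    have "\<bar>f z - f y - t * g y $ i\<bar> \<le> 1/2 * (L $ i * t^2)"
      using A2[of z y] sum_axis_sq[of L t i] by (simp add: z_def inner_axis mult.commute)
    then have "real (Suc n) * \<bar>f z - f y - t * g y $ i\<bar> \<le> real (Suc n) * (1/2 * (L $ i * t^2))"
      by (intro mult_left_mono) auto
    moreover have "real (Suc n) * \<bar>f z - f y - t * g y $ i\<bar> = \<bar>real (Suc n) * (f z - f y) - g y $ i\<bar>"
    proof -
      have "real (Suc n) * \<bar>f z - f y - t * g y $ i\<bar> = \<bar>real (Suc n) * (f z - f y - t * g y $ i)\<bar>"
        by (simp add: abs_mult)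
      also have "real (Suc n) * (f z - f y - t * g y $ i) = real (Suc n) * (f z - f y) - real (Suc n) * t * g y $ i"
        by (simp add: algebra_simps)
      also have "real (Suc n) * t = 1" by (simp add: t_def del: of_nat_Suc)
      finally show ?thesis by simp
    qed
    moreover have "real (Suc n) * (1/2 * (L $ i * t^2)) = L $ i / 2 * inverse (real (Suc n))"
      by (simp add: t_def power2_eq_square field_simps del: of_nat_Suc)
    moreover have "norm (real (Suc n) * (f (y + (1 / real (Suc n)) *\<^sub>R axis i 1) - f y) - g y $ i)
        = \<bar>real (Suc n) * (f z - f y) - g y $ i\<bar>"
      by (simp only: z_def t_def real_norm_def)
    ultimately show ?thesis by linarith
  qed
  have "(\<lambda>n. L $ i / 2 * inverse (real (Suc n))) \<longlonglongrightarrow> 0"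
    by (intro tendsto_mult_right_zero LIMSEQ_inverse_real_of_nat)
  then have "(\<lambda>n. real (Suc n) * (f (y + (1 / real (Suc n)) *\<^sub>R axis i 1) - f y) - g y $ i) \<longlonglongrightarrow> 0"
    by (rule Lim_null_comparison[OF always_eventually[OF allI[OF b]]])
  then have "(\<lambda>n. (real (Suc n) * (f (y + (1 / real (Suc n)) *\<^sub>R axis i 1) - f y) - g y $ i) + g y $ i) \<longlonglongrightarrow> 0 + g y $ i"
    by (intro tendsto_add) auto
  then show ?thesis by simp
qed

theorem lemma2:
  fixes f :: "real^'n \<Rightarrow> real" and g :: "real^'n \<Rightarrow> real^'n"
    and fstar :: real and L :: "real^'n"
    and M :: "'a measure" and F :: "nat \<Rightarrow> 'a measure"
    and x v :: "nat \<Rightarrow> 'a \<Rightarrow> real^'n"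
    and \<delta> \<xi> :: "nat \<Rightarrow> real" and C K :: nat
  assumes P: "prob_space M"
    and grad: "\<And>y. (f has_derivative (\<lambda>h. g y \<bullet> h)) (at y)"
    and A1: "\<And>y. f y \<ge> fstar"
    and L_nonneg: "\<And>i. L $ i \<ge> 0"
    and A2: "\<And>y z. \<bar>f z - f y - g y \<bullet> (z - y)\<bar> \<le> 1/2 * (\<Sum>i\<in>UNIV. L $ i * (z $ i - y $ i)^2)"
    and CK: "0 < C" "C < K"
    and \<delta>_pos: "\<And>k. k \<ge> 1 \<Longrightarrow> \<delta> k > 0"
    and F_sub: "\<And>k. subalgebra M (F k)"
    and F_mono: "\<And>k. sets (F k) \<subseteq> sets (F (Suc k))"
    and x_meas: "\<And>k. x k \<in> borel_measurable (F k)"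
    and v_meas: "\<And>k. v k \<in> borel_measurable (F k)"
    and v_sq: "\<And>k. integrable M (\<lambda>\<omega>. (norm (v k \<omega>))^2)"
    and step: "\<And>k \<omega>. k \<ge> 1 \<Longrightarrow> \<omega> \<in> space M \<Longrightarrow>
                 x (Suc k) \<omega> = x k \<omega> - \<delta> k *\<^sub>R sign_vec (v k \<omega>)"
    and fC_int: "integrable M (\<lambda>\<omega>. f (x C \<omega>))"
    and \<xi>_lim: "\<xi> \<longlonglongrightarrow> 0"
    and hyp: "\<And>k. C \<le> k \<Longrightarrow> k \<le> K \<Longrightarrow>
       (\<integral>\<omega>. (\<Sum>i\<in>UNIV. \<bar>g (x k \<omega>) $ i\<bar> *
           real_cond_exp M (vimage_algebra (space M) (x k) borel)
             (indicator {\<omega>'\<in>space M. sgn (v k \<omega>' $ i) \<noteq> sgn (g (x k \<omega>') $ i)}) \<omega>) \<partial>M)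
       \<le> \<xi> k"
  shows "(1 / real (K - C)) * (\<Sum>k\<in>{C..<K}. \<integral>\<omega>. l1norm (g (x k \<omega>)) \<partial>M)
           \<le> ((\<integral>\<omega>. f (x C \<omega>) \<partial>M) - fstar + 2 * (\<Sum>k\<in>{C..<K}. \<delta> k * \<xi> k)
               + (\<Sum>k\<in>{C..<K}. \<delta> k ^ 2 * l1norm L / 2))
             / (real (K - C) * Min (\<delta> ` {C..<K}))
       \<and> (\<forall>d \<kappa>. d > 0 \<longrightarrow> \<kappa> \<ge> 0 \<longrightarrow> (\<forall>k\<ge>1. \<delta> k = d / sqrt (real k))
             \<longrightarrow> (\<forall>k\<ge>1. \<xi> k = \<kappa> / sqrt (real k)) \<longrightarrow>
           (1 / real (K - C)) * (\<Sum>k\<in>{C..<K}. \<integral>\<omega>. l1norm (g (x k \<omega>)) \<partial>M)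
             \<le> (((\<integral>\<omega>. f (x C \<omega>) \<partial>M) - fstar) / d
                 + (2 * \<kappa> + l1norm L * d / 2) * (ln (real K) + 1))
               / (sqrt (real K) - real C / sqrt (real K)))"
  proof -
  interpret prob_space M by (rule P)
  have xM[measurable]: "x k \<in> borel_measurable M" for k
    using measurable_from_subalg[OF F_sub x_meas] .
  have vM[measurable]: "v k \<in> borel_measurable M" for k
    using measurable_from_subalg[OF F_sub v_meas] .
  have fB[measurable]: "f \<in> borel_measurable borel"
    by (intro borel_measurable_continuous_onI continuous_at_imp_continuous_on ballI
        has_derivative_continuous[OF grad])
  have gB[measurable]: "(\<lambda>y. g y $ i) \<in> borel_measurable borel" for i
  proof (rule borel_measurable_LIMSEQ_real[OF g_lim[OF A2]])
    fix n
    have c: "continuous_on UNIV (\<lambda>y::real^'n. y + (1 / real (Suc n)) *\<^sub>R axis i 1)"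
      by (intro continuous_intros)
    have "(\<lambda>y. f (y + (1 / real (Suc n)) *\<^sub>R axis i 1)) \<in> borel_measurable borel"
      using measurable_compose[OF borel_measurable_continuous_onI[OF c] fB] by simp
    then show "(\<lambda>y. real (Suc n) * (f (y + (1 / real (Suc n)) *\<^sub>R axis i 1) - f y)) \<in> borel_measurable borel"
      by measurable
  qed
  have fxM[measurable]: "(\<lambda>\<omega>. f (x k \<omega>)) \<in> borel_measurable M" for k
    using measurable_compose[OF xM fB] by simp
  have gxM[measurable]: "(\<lambda>\<omega>. g (x k \<omega>) $ i) \<in> borel_measurable M" for k i
    using measurable_compose[OF xM gB] by simp
  have vi[measurable]: "(\<lambda>\<omega>. v k \<omega> $ i) \<in> borel_measurable M" for k i
    using measurable_compose[OF vM borel_measurable_nth] by simp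
  define S where "S k i = {\<omega>\<in>space M. sgn (v k \<omega> $ i) \<noteq> sgn (g (x k \<omega>) $ i)}" for k i
  have S_sets[measurable]: "S k i \<in> sets M" for k i unfolding S_def by measurable
  have \<delta>nn: "\<delta> k \<ge> 0" if "C \<le> k" for k using \<delta>_pos[of k] CK that by force
  have l1nn: "l1norm y \<ge> 0" for y :: "real^'n" unfolding l1norm_def by (simp add: sum_nonneg)
  have l1L: "l1norm L \<ge> 0" by (rule l1nn)
  have gbd: "\<bar>g y $ i\<bar> \<le> f y - fstar + L $ i / 2" for y i by (rule g_bound[OF A2 A1 L_nonneg])
  have Sle: "(\<Sum>i\<in>UNIV. \<bar>g (x k \<omega>) $ i\<bar> * indicator (S k i) \<omega>) \<le> l1norm (g (x k \<omega>))" for k \<omega>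
    unfolding l1norm_def by (intro sum_mono) (auto simp: indicator_def)
  have pw: "f (x (Suc k) \<omega>) \<le> f (x k \<omega>) - \<delta> k * l1norm (g (x k \<omega>))
      + 2 * \<delta> k * (\<Sum>i\<in>UNIV. \<bar>g (x k \<omega>) $ i\<bar> * indicator (S k i) \<omega>) + \<delta> k ^ 2 * l1norm L / 2"
    if "C \<le> k" "\<omega> \<in> space M" for k \<omega>
  proof -
    have "x (Suc k) \<omega> = x k \<omega> - \<delta> k *\<^sub>R sign_vec (v k \<omega>)" using step[of k \<omega>] that CK by simp
    moreover have "(\<Sum>i\<in>UNIV. \<bar>g (x k \<omega>) $ i\<bar> * indicator (S k i) \<omega>) =
       (\<Sum>i\<in>UNIV. \<bar>g (x k \<omega>) $ i\<bar> * (if sgn (v k \<omega> $ i) \<noteq> sgn (g (x k \<omega>) $ i) then 1 else 0))"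
      using that(2) by (intro sum.cong) (auto simp: S_def indicator_def)
    ultimately show ?thesis
      using step_ineq[OF A2 L_nonneg \<delta>nn[OF that(1)], of "x k \<omega>" "v k \<omega>"] by simp
  qed
  have gint_of: "integrable M (\<lambda>\<omega>. \<bar>g (x k \<omega>) $ i\<bar>)" if "integrable M (\<lambda>\<omega>. f (x k \<omega>))" for k i
  proof (rule Bochner_Integration.integrable_bound[where f="\<lambda>\<omega>. \<bar>f (x k \<omega>)\<bar> + \<bar>fstar\<bar> + \<bar>L $ i\<bar>"])
    show "integrable M (\<lambda>\<omega>. \<bar>f (x k \<omega>)\<bar> + \<bar>fstar\<bar> + \<bar>L $ i\<bar>)"
      using that by (intro Bochner_Integration.integrable_add integrable_abs) auto
    show "AE \<omega> in M. norm (\<bar>g (x k \<omega>) $ i\<bar>) \<le> norm (\<bar>f (x k \<omega>)\<bar> + \<bar>fstar\<bar> + \<bar>L $ i\<bar>)"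
    proof (rule AE_I2)
      fix \<omega> assume "\<omega> \<in> space M"
      have "\<bar>g (x k \<omega>) $ i\<bar> \<le> \<bar>f (x k \<omega>)\<bar> + \<bar>fstar\<bar> + \<bar>L $ i\<bar>"
        using gbd[of "x k \<omega>" i] abs_ge_self[of "f (x k \<omega>)"] abs_ge_minus_self[of fstar]
          abs_ge_self[of "L $ i"] by linarith
      then show "norm (\<bar>g (x k \<omega>) $ i\<bar>) \<le> norm (\<bar>f (x k \<omega>)\<bar> + \<bar>fstar\<bar> + \<bar>L $ i\<bar>)"
        by simp
    qed
  qed measurable
  have l1int_of: "integrable M (\<lambda>\<omega>. l1norm (g (x k \<omega>)))" if "integrable M (\<lambda>\<omega>. f (x k \<omega>))" for k
    unfolding l1norm_def by (rule Bochner_Integration.integrable_sum) (rule gint_of[OF that])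
  have fint: "integrable M (\<lambda>\<omega>. f (x k \<omega>))" if "C \<le> k" for k
    using that
  proof (induction k rule: dec_induct)
    case base show ?case by (rule fC_int)
  next
    case (step k)
    have l1i: "integrable M (\<lambda>\<omega>. l1norm (g (x k \<omega>)))" by (rule l1int_of[OF step.IH])
    show ?case
    proof (rule Bochner_Integration.integrable_bound[where
          f="\<lambda>\<omega>. \<bar>fstar\<bar> + \<bar>f (x k \<omega>)\<bar> + \<delta> k * l1norm (g (x k \<omega>)) + \<delta> k ^ 2 * l1norm L / 2"])
      show "integrable M (\<lambda>\<omega>. \<bar>fstar\<bar> + \<bar>f (x k \<omega>)\<bar> + \<delta> k * l1norm (g (x k \<omega>)) + \<delta> k ^ 2 * l1norm L / 2)"
        using step.IH l1i by (intro Bochner_Integration.integrable_add integrable_abs integrable_mult_right) auto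
      show "AE \<omega> in M. norm (f (x (Suc k) \<omega>)) \<le> norm (\<bar>fstar\<bar> + \<bar>f (x k \<omega>)\<bar> + \<delta> k * l1norm (g (x k \<omega>)) + \<delta> k ^ 2 * l1norm L / 2)"
      proof (rule AE_I2)
        fix \<omega> assume \<omega>: "\<omega> \<in> space M"
        have d: "\<delta> k \<ge> 0" using \<delta>nn step.hyps(1) by simp
        have a: "f (x (Suc k) \<omega>) \<le> f (x k \<omega>) + \<delta> k * l1norm (g (x k \<omega>)) + \<delta> k ^ 2 * l1norm L / 2"
          using pw[OF step.hyps(1) \<omega>] Sle[of k \<omega>] mult_left_mono[OF Sle[of k \<omega>] d] by linarith
        have b: "0 \<le> \<delta> k * l1norm (g (x k \<omega>))" "0 \<le> \<delta> k ^ 2 * l1norm L / 2"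
          using d l1nn l1L by auto
        show "norm (f (x (Suc k) \<omega>)) \<le> norm (\<bar>fstar\<bar> + \<bar>f (x k \<omega>)\<bar> + \<delta> k * l1norm (g (x k \<omega>)) + \<delta> k ^ 2 * l1norm L / 2)"
        proof -
          let ?R = "\<bar>fstar\<bar> + \<bar>f (x k \<omega>)\<bar> + \<delta> k * l1norm (g (x k \<omega>)) + \<delta> k ^ 2 * l1norm L / 2"
          have c1: "f (x (Suc k) \<omega>) \<le> ?R"
            using a b abs_ge_self[of "f (x k \<omega>)"] abs_ge_zero[of fstar] by linarith
          have c2: "- f (x (Suc k) \<omega>) \<le> ?R"
            using b A1[of "x (Suc k) \<omega>"] abs_ge_minus_self[of fstar] abs_ge_zero[of "f (x k \<omega>)"] by linarith
          have "\<bar>f (x (Suc k) \<omega>)\<bar> \<le> ?R" by (rule abs_leI[OF c1 c2])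
          also have "?R \<le> \<bar>?R\<bar>" by (rule abs_ge_self)
          finally show ?thesis by (simp only: real_norm_def)
        qed
      qed
    qed measurable
  qed
  have gint: "integrable M (\<lambda>\<omega>. \<bar>g (x k \<omega>) $ i\<bar>)" if "C \<le> k" for k i using gint_of fint that by blast
  have l1int: "integrable M (\<lambda>\<omega>. l1norm (g (x k \<omega>)))" if "C \<le> k" for k using l1int_of fint that by blast
  have indint: "integrable M (\<lambda>\<omega>. \<bar>g (x k \<omega>) $ i\<bar> * indicator (S k i) \<omega>)" if "C \<le> k" for k i
    by (rule integrable_real_mult_indicator[OF S_sets gint[OF that]])
  have hyp': "(\<Sum>i\<in>UNIV. \<integral>\<omega>. \<bar>g (x k \<omega>) $ i\<bar> * indicator (S k i) \<omega> \<partial>M) \<le> \<xi> k"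
    if k: "C \<le> k" "k \<le> K" for k
  proof -
    let ?N = "vimage_algebra (space M) (x k) borel"
    have sub: "subalgebra M ?N"
      unfolding subalgebra_def
    proof
      show "space ?N = space M" by simp
      show "sets ?N \<subseteq> sets M"
        unfolding sets_vimage_algebra
        by (rule sets.sigma_sets_subset) (auto intro: measurable_sets[OF xM])
    qed
    interpret finite_measure_subalgebra M ?N by unfold_locales (rule sub)
    have xN: "x k \<in> measurable ?N borel" by (rule measurable_vimage_algebra1) auto
    have gN: "(\<lambda>\<omega>. \<bar>g (x k \<omega>) $ i\<bar>) \<in> borel_measurable ?N" for i
      using borel_measurable_abs[OF measurable_compose[OF xN gB]] by simp
    have ce: "integrable M (\<lambda>\<omega>. \<bar>g (x k \<omega>) $ i\<bar> * real_cond_exp M ?N (indicator (S k i)) \<omega>)"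
      "(\<integral>\<omega>. \<bar>g (x k \<omega>) $ i\<bar> * real_cond_exp M ?N (indicator (S k i)) \<omega> \<partial>M)
        = (\<integral>\<omega>. \<bar>g (x k \<omega>) $ i\<bar> * indicator (S k i) \<omega> \<partial>M)" for i
      using real_cond_exp_intg[OF indint[OF k(1)] gN borel_measurable_indicator[OF S_sets]] by auto
    have "(\<integral>\<omega>. (\<Sum>i\<in>UNIV. \<bar>g (x k \<omega>) $ i\<bar> * real_cond_exp M ?N (indicator (S k i)) \<omega>) \<partial>M)
       = (\<Sum>i\<in>UNIV. \<integral>\<omega>. \<bar>g (x k \<omega>) $ i\<bar> * indicator (S k i) \<omega> \<partial>M)"
    proof -
      have "(\<integral>\<omega>. (\<Sum>i\<in>UNIV. \<bar>g (x k \<omega>) $ i\<bar> * real_cond_exp M ?N (indicator (S k i)) \<omega>) \<partial>M)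
         = (\<Sum>i\<in>UNIV. (\<integral>\<omega>. \<bar>g (x k \<omega>) $ i\<bar> * real_cond_exp M ?N (indicator (S k i)) \<omega> \<partial>M))"
        by (rule Bochner_Integration.integral_sum[where I=UNIV and M=M and f="\<lambda>i \<omega>. \<bar>g (x k \<omega>) $ i\<bar> * real_cond_exp M ?N (indicator (S k i)) \<omega>"])
          (rule ce(1))
      also have "\<dots> = (\<Sum>i\<in>UNIV. \<integral>\<omega>. \<bar>g (x k \<omega>) $ i\<bar> * indicator (S k i) \<omega> \<partial>M)"
        by (rule sum.cong[OF refl]) (rule ce(2))
      finally show ?thesis .
    qed
    then have eq: "(\<integral>\<omega>. (\<Sum>i\<in>UNIV. \<bar>g (x k \<omega>) $ i\<bar> * real_cond_exp M ?N
         (indicator {\<omega>'\<in>space M. sgn (v k \<omega>' $ i) \<noteq> sgn (g (x k \<omega>') $ i)}) \<omega>) \<partial>M)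
       = (\<Sum>i\<in>UNIV. \<integral>\<omega>. \<bar>g (x k \<omega>) $ i\<bar> * indicator (S k i) \<omega> \<partial>M)"
      unfolding S_def .
    show ?thesis using eq hyp[OF k] by linarith
  qed
  define a where "a k = (\<integral>\<omega>. f (x k \<omega>) \<partial>M)" for k
  define e where "e k = (\<integral>\<omega>. l1norm (g (x k \<omega>)) \<partial>M)" for k
  have e_nn: "e k \<ge> 0" for k unfolding e_def by (rule integral_nonneg_AE) (simp add: l1nn)
  have onestep: "\<delta> k * e k \<le> a k - a (Suc k) + 2 * (\<delta> k * \<xi> k) + \<delta> k ^ 2 * l1norm L / 2"
    if k: "C \<le> k" "k < K" for k
  proof -
    define Sx where "Sx \<omega> = (\<Sum>i\<in>UNIV. \<bar>g (x k \<omega>) $ i\<bar> * indicator (S k i) \<omega>)" for \<omega>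
    define c where "c = \<delta> k ^ 2 * l1norm L / 2"
    have Sxi: "integrable M Sx" unfolding Sx_def
      by (rule Bochner_Integration.integrable_sum) (rule indint[OF k(1)])
    have Sxe: "(\<integral>\<omega>. Sx \<omega> \<partial>M) = (\<Sum>i\<in>UNIV. \<integral>\<omega>. \<bar>g (x k \<omega>) $ i\<bar> * indicator (S k i) \<omega> \<partial>M)"
      unfolding Sx_def by (rule Bochner_Integration.integral_sum[where I=UNIV and M=M and f="\<lambda>i \<omega>. \<bar>g (x k \<omega>) $ i\<bar> * indicator (S k i) \<omega>"]) (rule indint[OF k(1)])
    let ?R = "\<lambda>\<omega>. f (x k \<omega>) - \<delta> k * l1norm (g (x k \<omega>)) + 2 * \<delta> k * Sx \<omega> + c"
    have i1: "integrable M (\<lambda>\<omega>. f (x k \<omega>) - \<delta> k * l1norm (g (x k \<omega>)))"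
      using fint[OF k(1)] l1int[OF k(1)] by auto
    have i2: "integrable M (\<lambda>\<omega>. 2 * \<delta> k * Sx \<omega>)" using Sxi by auto
    have i12: "integrable M (\<lambda>\<omega>. f (x k \<omega>) - \<delta> k * l1norm (g (x k \<omega>)) + 2 * \<delta> k * Sx \<omega>)"
      using i1 i2 by (rule Bochner_Integration.integrable_add)
    have iR: "integrable M ?R" using i12 by auto
    have "a (Suc k) \<le> (\<integral>\<omega>. ?R \<omega> \<partial>M)"
      unfolding a_def
    proof (rule integral_mono)
      show "integrable M (\<lambda>\<omega>. f (x (Suc k) \<omega>))" using fint k by simp
      show "integrable M ?R" by (rule iR)
    qed (use pw k in \<open>auto simp: Sx_def c_def\<close>)
    also have "(\<integral>\<omega>. ?R \<omega> \<partial>M) = (\<integral>\<omega>. f (x k \<omega>) - \<delta> k * l1norm (g (x k \<omega>)) + 2 * \<delta> k * Sx \<omega> \<partial>M) + c"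
      using i12 by (simp add: prob_space)
    also have "(\<integral>\<omega>. f (x k \<omega>) - \<delta> k * l1norm (g (x k \<omega>)) + 2 * \<delta> k * Sx \<omega> \<partial>M)
        = (\<integral>\<omega>. f (x k \<omega>) - \<delta> k * l1norm (g (x k \<omega>)) \<partial>M) + (\<integral>\<omega>. 2 * \<delta> k * Sx \<omega> \<partial>M)"
      by (rule Bochner_Integration.integral_add[OF i1 i2])
    also have "(\<integral>\<omega>. f (x k \<omega>) - \<delta> k * l1norm (g (x k \<omega>)) \<partial>M) = a k - \<delta> k * e k"
      using fint[OF k(1)] l1int[OF k(1)] by (simp add: a_def e_def)
    also have "(\<integral>\<omega>. 2 * \<delta> k * Sx \<omega> \<partial>M) = 2 * \<delta> k * (\<Sum>i\<in>UNIV. \<integral>\<omega>. \<bar>g (x k \<omega>) $ i\<bar> * indicator (S k i) \<omega> \<partial>M)"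
      by (simp add: Sxe)
    finally have "a (Suc k) \<le> a k - \<delta> k * e k
        + 2 * \<delta> k * (\<Sum>i\<in>UNIV. \<integral>\<omega>. \<bar>g (x k \<omega>) $ i\<bar> * indicator (S k i) \<omega> \<partial>M) + \<delta> k ^ 2 * l1norm L / 2"
      unfolding c_def by simp
    moreover     have "\<delta> k * (\<Sum>i\<in>UNIV. \<integral>\<omega>. \<bar>g (x k \<omega>) $ i\<bar> * indicator (S k i) \<omega> \<partial>M) \<le> \<delta> k * \<xi> k"
      using k by (intro mult_left_mono hyp' \<delta>nn) auto
    ultimately show ?thesis by linarith
  qed
  have fin: "finite {C..<K}" "{C..<K} \<noteq> {}" using CK by auto
  have tele: "(\<Sum>k\<in>{C..<K}. a k - a (Suc k)) = a C - a K"
    using sum_Suc_diff'[of C K a] CK by (simp add: sum_negf[symmetric] sum_subtractf)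
  have aK: "a K \<ge> fstar" unfolding a_def
    by (rule integral_ge_const) (use fint CK A1 in auto)
  define N where "N = a C - fstar + 2 * (\<Sum>k\<in>{C..<K}. \<delta> k * \<xi> k) + (\<Sum>k\<in>{C..<K}. \<delta> k ^ 2 * l1norm L / 2)"
  have sde: "(\<Sum>k\<in>{C..<K}. \<delta> k * e k) \<le> N"
  proof -
    have "(\<Sum>k\<in>{C..<K}. \<delta> k * e k) \<le> (\<Sum>k\<in>{C..<K}. (a k - a (Suc k)) + 2 * (\<delta> k * \<xi> k) + \<delta> k ^ 2 * l1norm L / 2)"
      by (intro sum_mono) (use onestep in auto)
    also have "\<dots> = a C - a K + 2 * (\<Sum>k\<in>{C..<K}. \<delta> k * \<xi> k) + (\<Sum>k\<in>{C..<K}. \<delta> k ^ 2 * l1norm L / 2)"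
      by (simp add: sum.distrib tele sum_distrib_left)
    finally show ?thesis using aK unfolding N_def by linarith
  qed
  define m where "m = Min (\<delta> ` {C..<K})"
  have m_pos: "m > 0" unfolding m_def using fin \<delta>_pos CK by (subst Min_gr_iff) auto
  have m_le: "m \<le> \<delta> k" if "k \<in> {C..<K}" for k unfolding m_def using fin that by auto
  define E where "E = (\<Sum>k\<in>{C..<K}. e k)"
  have mE: "m * E \<le> N"
  proof -
    have "m * E = (\<Sum>k\<in>{C..<K}. m * e k)" by (simp add: E_def sum_distrib_left)
    also have "\<dots> \<le> (\<Sum>k\<in>{C..<K}. \<delta> k * e k)"
      by (intro sum_mono mult_right_mono m_le e_nn)
    finally show ?thesis using sde by linarith
  qed
  have E_nn: "E \<ge> 0" unfolding E_def by (simp add: sum_nonneg e_nn)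
  have r_pos: "real (K - C) > 0" using CK by simp
  have part1: "(1 / real (K - C)) * E \<le> N / (real (K - C) * m)"
  proof -
    have "E \<le> N / m" using mE m_pos by (simp add: pos_le_divide_eq mult.commute)
    then have "(1 / real (K - C)) * E \<le> (1 / real (K - C)) * (N / m)"
      using r_pos by (intro mult_left_mono) auto
    then show ?thesis by simp
  qed
  have part2: "(1 / real (K - C)) * E
         \<le> ((a C - fstar) / d + (2 * \<kappa> + l1norm L * d / 2) * (ln (real K) + 1))
           / (sqrt (real K) - real C / sqrt (real K))"
    if d: "d > 0" "\<kappa> \<ge> 0" "\<forall>k\<ge>1. \<delta> k = d / sqrt (real k)" "\<forall>k\<ge>1. \<xi> k = \<kappa> / sqrt (real k)" for d \<kappa>
  proof -
    have Kp: "real K > 0" using CK by simp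
    have sK: "sqrt (real K) > 0" using Kp by simp
    have mK: "d / sqrt (real K) \<le> m"
      unfolding m_def using fin
    proof (subst Min_ge_iff)
      show "\<forall>a\<in>\<delta> ` {C..<K}. d / sqrt (real K) \<le> a"
      proof
        fix b assume "b \<in> \<delta> ` {C..<K}"
        then obtain k where k: "k \<in> {C..<K}" "b = \<delta> k" by auto
        have k1: "k \<ge> 1" using k CK by auto
        have "sqrt (real k) \<le> sqrt (real K)" using k by auto
        then have "d / sqrt (real K) \<le> d / sqrt (real k)"
          using k1 d(1) by (intro divide_left_mono) auto
        then show "d / sqrt (real K) \<le> b" using k d(3) k1 by simp
      qed
    qed auto
    define H where "H = (\<Sum>k\<in>{C..<K}. 1 / real k)"
    have H_le: "H \<le> ln (real K) + 1"
    proof -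
      have "H \<le> (\<Sum>k=1..K. 1 / real k)"
        unfolding H_def using CK by (intro sum_mono2) auto
      also have "\<dots> \<le> ln (real K) + 1" using CK by (intro harm_bound) auto
      finally show ?thesis .
    qed
    have H_nn: "H \<ge> 0" unfolding H_def by (simp add: sum_nonneg)
    have s1: "(\<Sum>k\<in>{C..<K}. \<delta> k * \<xi> k) = d * \<kappa> * H"
      unfolding H_def sum_distrib_left
    proof (intro sum.cong refl)
      fix k assume "k \<in> {C..<K}"
      then have k1: "k \<ge> 1" using CK by auto
      then show "\<delta> k * \<xi> k = d * \<kappa> * (1 / real k)" using d(3,4) by simp
    qed
    have s2: "(\<Sum>k\<in>{C..<K}. \<delta> k ^ 2 * l1norm L / 2) = d^2 * l1norm L / 2 * H"
      unfolding H_def sum_distrib_left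
    proof (intro sum.cong refl)
      fix k assume "k \<in> {C..<K}"
      then have k1: "k \<ge> 1" using CK by auto
      then show "\<delta> k ^ 2 * l1norm L / 2 = d^2 * l1norm L / 2 * (1 / real k)"
        using d(3) by (simp add: power_divide)
    qed
    define N' where "N' = a C - fstar + (2 * d * \<kappa> + d^2 * l1norm L / 2) * (ln (real K) + 1)"
    have NN': "N \<le> N'"
    proof -
      have "N = a C - fstar + (2 * d * \<kappa> + d^2 * l1norm L / 2) * H"
        unfolding N_def s1 s2 by (simp add: algebra_simps)
      moreover have "(2 * d * \<kappa> + d^2 * l1norm L / 2) * H \<le> (2 * d * \<kappa> + d^2 * l1norm L / 2) * (ln (real K) + 1)"
        using H_le d l1L by (intro mult_left_mono) auto
      ultimately show ?thesis unfolding N'_def by linarith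
    qed
    have "d / sqrt (real K) * E \<le> m * E" using mK E_nn by (rule mult_right_mono)
    then have "d / sqrt (real K) * E \<le> N'" using mE NN' by linarith
    then have EN: "E \<le> N' * sqrt (real K) / d" using d(1) sK by (simp add: field_simps)
    have "(1 / real (K - C)) * E \<le> (1 / real (K - C)) * (N' * sqrt (real K) / d)"
      using EN r_pos by (intro mult_left_mono) auto
    also have "\<dots> = ((a C - fstar) / d + (2 * \<kappa> + l1norm L * d / 2) * (ln (real K) + 1))
           / (sqrt (real K) - real C / sqrt (real K))"
    proof -
      have "sqrt (real K) - real C / sqrt (real K) = real (K - C) / sqrt (real K)"
        using sK CK by (simp add: field_simps of_nat_diff)
      then show ?thesis using d(1) sK r_pos
        by (simp add: N'_def field_simps power2_eq_square)
    qed
    finally show ?thesis .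
  qed
  show ?thesis
    using part1 part2 unfolding E_def e_def a_def N_def m_def by blast
qed

end
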